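(* Let $M,N,K$ be positive integers, $s$ a non-negative integer, $X\in\mathbb{R}^{N\times K}$ an $s$-row sparse matrix, and $A\in\mathbb{R}^{M\times N}$. Let $Y=AX$ and $r=\operatorname{rank}(Y)$, and suppose the map $Z\mapsto AZ$ is injective on $\Sigma_{s,r}$. Then: (i) $Y$ can be written as a product $Y=VU$ where $V\in\mathbb{R}^{M\times r}$ with $\operatorname{rank}(V)=r$ and $U\in\mathbb{R}^{r\times K}$ with $UU^T=I_r$ (the $r\times r$ identity matrix); (ii) for any such factorization $Y=VU$, the problem $\operatorname{argmin}_{Z\in\mathbb{R}^{N\times r}}\|Z\|_0$ subject to $AZ=V$ has a unique solution $W\in\mathbb{R}^{N\times r}$, and this $W$ is $s$-row sparse and has full column rank; (iii) $X=WU$.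
   Context: A matrix in $\mathbb{R}^{N\times K}$ is called $s$-row sparse if at most $s$ of its rows are non-zero. $\Sigma_{s,r}$ denotes the set of all $s$-row sparse matrices in $\mathbb{R}^{N\times K}$ of rank at least $r$. For a matrix $Z$, $\|Z\|_0$ denotes the number of non-zero rows of $Z$. *)

theory Defs
  imports "Jordan_Normal_Form.DL_Rank_Submatrix"
begin

definition mrank :: "real mat \<Rightarrow> nat" where
  "mrank A = vec_space.rank (dim_row A) A"

(* ||Z||_0 : number of non-zero rows *)
definition nzrows :: "real mat \<Rightarrow> nat" where
  "nzrows Z = card {i. i < dim_row Z \<and> row Z i \<noteq> 0\<^sub>v (dim_col Z)}"

definition row_sparse :: "nat \<Rightarrow> real mat \<Rightarrow> bool" where
  "row_sparse s Z \<longleftrightarrow> nzrows Z \<le> s"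

definition Sigma_sr :: "nat \<Rightarrow> nat \<Rightarrow> nat \<Rightarrow> nat \<Rightarrow> real mat set" where
  "Sigma_sr s r N K = {Z \<in> carrier_mat N K. row_sparse s Z \<and> mrank Z \<ge> r}"

definition l0_min :: "real mat \<Rightarrow> real mat \<Rightarrow> nat \<Rightarrow> nat \<Rightarrow> real mat \<Rightarrow> bool" where
  "l0_min A V N r W \<longleftrightarrow> W \<in> carrier_mat N r \<and> A * W = V \<and>
     (\<forall>Z \<in> carrier_mat N r. A * Z = V \<longrightarrow> nzrows W \<le> nzrows Z)"

end

theory Submission imports Defs begin

lemma mrank_mult_le:
  assumes B: "B \<in> carrier_mat n m" and C: "C \<in> carrier_mat m k"
  shows "mrank (B * C) \<le> mrank B"
proof -
  interpret vec_space "TYPE(real)" n .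
  have BC: "B * C \<in> carrier_mat n k" using B C by auto
  have r1: "mrank (B*C) = rank (B*C)" "mrank B = rank B" using B C unfolding mrank_def by auto
  define W where "W = span (set (cols B))"
  have cs: "col_space B = {y\<in>carrier_vec (dim_row B). \<exists>x\<in>carrier_vec (dim_col B). B *\<^sub>v x = y}"
    by (rule col_space_eq[OF B])
  have "set (cols (B * C)) \<subseteq> W"
  proof
    fix x assume "x \<in> set (cols (B * C))"
    then obtain j where j: "j < k" "x = col (B*C) j" using BC
      by (metis carrier_matD(2) cols_length cols_nth in_set_conv_nth)
    have "x = B *\<^sub>v col C j" using j B C by auto
    moreover have "col C j \<in> carrier_vec (dim_col B)" using B C by auto
    ultimately have "x \<in> col_space B" unfolding cs using B by auto
    then show "x \<in> W" unfolding W_def col_space_def .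
  qed
  have sW: "VectorSpace.subspace class_ring W V"
    using W_def B cols_dim carrier_matD(1) span_is_subspace by (metis)
  then have "span (set (cols (B*C))) \<subseteq> W"
    by (simp add: \<open>set (cols (B * C)) \<subseteq> W\<close> span_is_subset subspace_def)
  have "VectorSpace.subspace class_ring (span (set (cols (B*C)))) V"
    by (metis BC cols_dim carrier_matD(1) span_is_subspace)
  have subspace: "VectorSpace.subspace class_ring (span (set (cols (B*C)))) (vs W)"
    using nested_subspaces[OF sW \<open>VectorSpace.subspace class_ring (span (set (cols (B*C)))) V\<close>
      \<open>span (set (cols (B*C))) \<subseteq> W\<close>] .
  have fin_dim: "vectorspace.fin_dim class_ring (vs W)"
    using W_def B fin_dim_span_cols by auto
  have "vectorspace.fin_dim class_ring (span_vs (set (cols (B*C))))"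
    using BC vec_space.fin_dim_span_cols by blast
  then have "rank (B*C) \<le> vectorspace.dim class_ring (vs W)" unfolding rank_def
    using vectorspace.subspace_dim[OF subspace_is_vs[OF sW] subspace fin_dim] by auto
  then show ?thesis using r1 unfolding rank_def W_def by auto
qed

lemma mrank_le_ncols:
  assumes B: "B \<in> carrier_mat n k" shows "mrank B \<le> k"
proof -
  interpret vec_space "TYPE(real)" n .
  show ?thesis using rank_le_nc[OF B] B unfolding mrank_def by auto
qed

lemma mrank_full_if_ker:
  assumes B: "B \<in> carrier_mat n k"
    and ker: "\<And>c. c \<in> carrier_vec k \<Longrightarrow> B *\<^sub>v c = 0\<^sub>v n \<Longrightarrow> c = 0\<^sub>v k"
  shows "mrank B = k"
proof -
  interpret vec_space "TYPE(real)" n .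
  have dist: "distinct (cols B)"
  proof (rule ccontr)
    assume "\<not> distinct (cols B)"
    then obtain i j where ij: "i < k" "j < k" "i \<noteq> j" "col B i = col B j"
      using B by (metis carrier_matD(2) cols_length cols_nth distinct_conv_nth)
    define c :: "real vec" where "c = unit_vec k i - unit_vec k j"
    have cc: "c \<in> carrier_vec k" unfolding c_def by auto
    have "B *\<^sub>v c = B *\<^sub>v unit_vec k i - B *\<^sub>v unit_vec k j"
      unfolding c_def using B by (metis mult_minus_distrib_mat_vec unit_vec_carrier)
    also have "\<dots> = 0\<^sub>v n"
    proof (rule eq_vecI)
      fix a assume "a < dim_vec (0\<^sub>v n :: real vec)"
      then have a: "a < n" by simp
      have "row B a $ i = row B a $ j" using ij a B by (metis carrier_matD col_def index_vec row_def)
      then show "(B *\<^sub>v unit_vec k i - B *\<^sub>v unit_vec k j) $ a = 0\<^sub>v n $ a"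
        using a ij B by (simp add: mult_mat_vec_def)
    qed (use B in auto)
    finally have "c = 0\<^sub>v k" using ker cc by auto
    then have "c $ i = 0" by (simp add: ij)
    then show False unfolding c_def using ij by auto
  qed
  have "lin_indpt (set (cols B))"
  proof
    assume "lin_dep (set (cols B))"
    from lin_depE[OF B this dist] obtain v where "v \<in> carrier_vec k" "v \<noteq> 0\<^sub>v k" "B *\<^sub>v v = 0\<^sub>v n" .
    then show False using ker by auto
  qed
  then have "rank B = k" using lin_indpt_full_rank[OF B dist] by auto
  then show ?thesis unfolding mrank_def using B by auto
qed

lemma ker_if_mrank_full:
  assumes B: "B \<in> carrier_mat n k" and r: "mrank B = k"
    and c: "c \<in> carrier_vec k" and z: "B *\<^sub>v c = 0\<^sub>v n"
  shows "c = 0\<^sub>v k"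
proof (rule ccontr)
  assume nz: "c \<noteq> 0\<^sub>v k"
  interpret vec_space "TYPE(real)" n .
  have rk: "rank B = k" using r B unfolding mrank_def by auto
  show False
  proof (cases "distinct (cols B)")
    case True
    then have "lin_indpt (set (cols B))" using full_rank_lin_indpt[OF B rk] by auto
    then show False using lin_depI[OF B c nz z True] by blast
  next
    case False
    obtain S where "maximal S (\<lambda>T. T \<subseteq> set (cols B) \<and> lin_indpt T)"
      using maximal_exists[of "(\<lambda>T. T \<subseteq> set (cols B) \<and> lin_indpt T)" "card (set (cols B))" "{}"]
      by (meson List.finite_set card_mono empty_iff empty_subsetI finite_lin_indpt2 rev_finite_subset)
    then have "card S \<le> card (set (cols B))" by (simp add: card_mono maximal_def)
    moreover have "card (set (cols B)) < k"
      using B False by (metis card_distinct carrier_matD(2) card_length cols_length le_neq_implies_less)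
    ultimately show False using rank_card_indpt[OF B \<open>maximal S _\<close>] rk by simp
  qed
qed


definition comb :: "nat \<Rightarrow> (nat \<Rightarrow> real) \<Rightarrow> (nat \<Rightarrow> real vec) \<Rightarrow> nat \<Rightarrow> real vec" where
  "comb K al f k = vec K (\<lambda>b. \<Sum>i<k. al i * f i $ b)"

lemma comb_carrier[simp]: "comb K al f k \<in> carrier_vec K" unfolding comb_def by auto
lemma comb_dim[simp]: "dim_vec (comb K al f k) = K" unfolding comb_def by auto

lemma dot_comb:
  assumes a: "a \<in> carrier_vec K" and f: "\<And>i. i < k \<Longrightarrow> f i \<in> carrier_vec K"
  shows "a \<bullet> comb K al f k = (\<Sum>i<k. al i * (a \<bullet> f i))"
proof -
  have "a \<bullet> comb K al f k = (\<Sum>b<K. a $ b * (\<Sum>i<k. al i * f i $ b))"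
    unfolding scalar_prod_def comb_def by (simp add: atLeast0LessThan)
  also have "\<dots> = (\<Sum>b<K. \<Sum>i<k. al i * (a $ b * f i $ b))"
    by (simp add: sum_distrib_left algebra_simps)
  also have "\<dots> = (\<Sum>i<k. \<Sum>b<K. al i * (a $ b * f i $ b))" by (rule sum.swap)
  also have "\<dots> = (\<Sum>i<k. al i * (a \<bullet> f i))"
  proof -
    have fd: "\<And>i. i<k \<Longrightarrow> dim_vec (f i) = K" using f by auto
    show ?thesis using fd a by (auto simp: scalar_prod_def sum_distrib_left atLeast0LessThan intro!: sum.cong)
  qed
  finally show ?thesis .
qed

lemma comb_dot:
  assumes a: "a \<in> carrier_vec K" and f: "\<And>i. i < k \<Longrightarrow> f i \<in> carrier_vec K"
  shows "comb K al f k \<bullet> a = (\<Sum>i<k. al i * (f i \<bullet> a))"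
proof -
  have "comb K al f k \<bullet> a = a \<bullet> comb K al f k" by (rule comm_scalar_prod[OF comb_carrier a])
  also have "\<dots> = (\<Sum>i<k. al i * (a \<bullet> f i))" by (rule dot_comb[OF a f])
  also have "\<dots> = (\<Sum>i<k. al i * (f i \<bullet> a))" using a f by (auto intro!: sum.cong simp: comm_scalar_prod[of a K])
  finally show ?thesis .
qed

lemma self_dot_pos:
  assumes w: "(w :: real vec) \<in> carrier_vec K" and nz: "w \<noteq> 0\<^sub>v K"
  shows "w \<bullet> w > 0"
proof -
  obtain j where j: "j < K" "w $ j \<noteq> 0" using w nz by (metis carrier_vecD eq_vecI index_zero_vec(1) index_zero_vec(2))
  have "w \<bullet> w = (\<Sum>b\<in>{0..<K}. w $ b * w $ b)" using w unfolding scalar_prod_def by auto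
  also have "\<dots> > 0"
  proof (rule sum_pos2[of _ j])
    show "w $ j * w $ j > 0" using j(2) not_real_square_gt_zero by blast
  qed (use j in auto)
  finally show ?thesis .
qed

definition orth_ok :: "nat \<Rightarrow> real vec list \<Rightarrow> nat \<Rightarrow> (nat \<Rightarrow> real vec) \<Rightarrow> bool" where
  "orth_ok K ys k f \<longleftrightarrow> (\<forall>i<k. f i \<in> carrier_vec K) \<and>
     (\<forall>i<k. \<forall>j<k. f i \<bullet> f j = (if i = j then 1 else 0)) \<and>
     (\<forall>y\<in>set ys. y = comb K (\<lambda>i. y \<bullet> f i) f k) \<and>
     (\<forall>i<k. \<forall>v\<in>carrier_vec K. (\<forall>y\<in>set ys. y \<bullet> v = 0) \<longrightarrow> f i \<bullet> v = 0)"

lemma orth_exists: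
  assumes "set ys \<subseteq> carrier_vec K"
  shows "\<exists>k f. orth_ok K ys k f"
  using assms
proof (induction ys)
  case Nil
  show ?case by (rule exI[of _ 0], auto simp: orth_ok_def)
next
  case (Cons y ys)
  then obtain k f where ok: "orth_ok K ys k f" by auto
  have y: "y \<in> carrier_vec K" and ysc: "set ys \<subseteq> carrier_vec K" using Cons.prems by auto
  have fc: "\<And>i. i < k \<Longrightarrow> f i \<in> carrier_vec K" using ok unfolding orth_ok_def by auto
  have on: "\<And>i j. i < k \<Longrightarrow> j < k \<Longrightarrow> f i \<bullet> f j = (if i = j then 1 else 0)"
    using ok unfolding orth_ok_def by auto
  have rec: "\<And>y0. y0 \<in> set ys \<Longrightarrow> y0 = comb K (\<lambda>i. y0 \<bullet> f i) f k"
    using ok unfolding orth_ok_def by auto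
  have perp: "\<And>i v. i < k \<Longrightarrow> v \<in> carrier_vec K \<Longrightarrow> (\<forall>y\<in>set ys. y \<bullet> v = 0) \<Longrightarrow> f i \<bullet> v = 0"
    using ok unfolding orth_ok_def by auto
  define al where "al = (\<lambda>i. y \<bullet> f i)"
  define w where "w = y - comb K al f k"
  have wc: "w \<in> carrier_vec K" unfolding w_def using y by auto
  have cf: "comb K al f k \<bullet> f j = al j" if j: "j < k" for j
  proof -
    have "comb K al f k \<bullet> f j = (\<Sum>i<k. al i * (f i \<bullet> f j))" by (rule comb_dot[OF fc[OF j] fc])
    also have "\<dots> = (\<Sum>i<k. if i = j then al j else 0)" using on j by (intro sum.cong) auto
    also have "\<dots> = al j" using j by (simp add: sum.delta)
    finally show ?thesis .
  qed
  have wf: "w \<bullet> f j = 0" if j: "j < k" for j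
  proof -
    have "w \<bullet> f j = y \<bullet> f j - comb K al f k \<bullet> f j"
      unfolding w_def by (rule minus_scalar_prod_distrib[OF y comb_carrier fc[OF j]])
    then show ?thesis using cf[OF j] unfolding al_def by simp
  qed
  have yw: "y = w + comb K al f k" unfolding w_def using y by (intro eq_vecI) auto
  show ?case
  proof (cases "w = 0\<^sub>v K")
    case True
    then have "y = comb K al f k" using yw y by auto
    then have "orth_ok K (y # ys) k f" using ok unfolding orth_ok_def al_def by auto
    then show ?thesis by blast
  next
    case False
    have wpos: "w \<bullet> w > 0" by (rule self_dot_pos[OF wc False])
    define c where "c = 1 / sqrt (w \<bullet> w)"
    define nv where "nv = c \<cdot>\<^sub>v w"
    define f' where "f' = f(k := nv)"
    have nvc: "nv \<in> carrier_vec K" unfolding nv_def using wc by auto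
    have f'c: "\<And>i. i < Suc k \<Longrightarrow> f' i \<in> carrier_vec K" unfolding f'_def using fc nvc
      by (auto simp: less_Suc_eq)
    have nn: "nv \<bullet> nv = 1"
    proof -
      have "nv \<bullet> nv = c * c * (w \<bullet> w)" unfolding nv_def using wc by simp
      also have "\<dots> = 1" unfolding c_def using wpos
        by (simp add: field_simps)
      finally show ?thesis .
    qed
    have nf: "nv \<bullet> f j = 0" if "j < k" for j unfolding nv_def using wf[OF that] wc fc[OF that] by simp
    have fn: "f j \<bullet> nv = 0" if "j < k" for j using nf[OF that] comm_scalar_prod[OF fc[OF that] nvc] by simp
    have wy0: "w \<bullet> y0 = 0" if y0: "y0 \<in> set ys" for y0
    proof -
      have "w \<bullet> y0 = w \<bullet> comb K (\<lambda>i. y0 \<bullet> f i) f k" using rec[OF y0] by simp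
      also have "\<dots> = 0" using dot_comb[OF wc fc] wf by simp
      finally show ?thesis .
    qed
    have "orth_ok K (y # ys) (Suc k) f'"
      unfolding orth_ok_def
    proof (intro conjI allI impI ballI)
      fix i assume "i < Suc k" then show "f' i \<in> carrier_vec K" by (rule f'c)
    next
      fix i j assume i: "i < Suc k" and j: "j < Suc k"
      show "f' i \<bullet> f' j = (if i = j then 1 else 0)"
        using i j on nn nf fn unfolding f'_def by (auto simp: less_Suc_eq)
    next
      fix y0 assume y0: "y0 \<in> set (y # ys)"
      show "y0 = comb K (\<lambda>i. y0 \<bullet> f' i) f' (Suc k)"
      proof (cases "y0 \<in> set ys")
        case True
        have y0c: "y0 \<in> carrier_vec K" using True ysc by auto
        have "y0 \<bullet> nv = 0" unfolding nv_def using wy0[OF True] comm_scalar_prod[OF wc y0c] wc y0c by simp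
        then have "comb K (\<lambda>i. y0 \<bullet> f' i) f' (Suc k) = comb K (\<lambda>i. y0 \<bullet> f i) f k"
          unfolding comb_def f'_def by (auto intro!: eq_vecI sum.cong)
        then show ?thesis using rec[OF True] by simp
      next
        case False
        then have y0y: "y0 = y" using y0 by auto
        have "y \<bullet> w = w \<bullet> w + comb K al f k \<bullet> w"
          using yw wc by (metis add_scalar_prod_distrib comb_carrier)
        also have "comb K al f k \<bullet> w = 0"
          using comb_dot[OF wc fc] wf fc wc by (simp add: comm_scalar_prod[of _ K w])
        finally have yww: "y \<bullet> w = w \<bullet> w" by simp
        have ynv: "(y \<bullet> nv) * c = 1" unfolding nv_def using y wc yww wpos
          unfolding c_def by (simp add: field_simps)
        show ?thesis unfolding y0y
        proof (rule eq_vecI)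
          fix b assume "b < dim_vec (comb K (\<lambda>i. y \<bullet> f' i) f' (Suc k))"
          then have b: "b < K" by simp
          have "comb K (\<lambda>i. y \<bullet> f' i) f' (Suc k) $ b = (\<Sum>i<k. al i * f i $ b) + (y \<bullet> nv) * nv $ b"
            unfolding comb_def f'_def al_def using b by (auto intro!: sum.cong)
          also have "(y \<bullet> nv) * nv $ b = w $ b" using b wc ynv unfolding nv_def
            by (simp add: mult.assoc[symmetric])
          finally show "y $ b = comb K (\<lambda>i. y \<bullet> f' i) f' (Suc k) $ b"
            using b yw wc by (simp add: comb_def)
        qed (use y in auto)
      qed
    next
      fix i v assume i: "i < Suc k" and v: "v \<in> carrier_vec K" and o: "\<forall>y\<in>set (y # ys). y \<bullet> v = 0"
      show "f' i \<bullet> v = 0"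
      proof (cases "i < k")
        case True then show ?thesis using perp[OF True v] o unfolding f'_def by auto
      next
        case False
        then have ik: "i = k" using i by auto
        have "w \<bullet> v = y \<bullet> v - comb K al f k \<bullet> v"
          unfolding w_def by (rule minus_scalar_prod_distrib[OF y comb_carrier v])
        also have "comb K al f k \<bullet> v = 0" using comb_dot[OF v fc] perp[OF _ v] o by simp
        finally have "w \<bullet> v = 0" using o by simp
        then show ?thesis unfolding f'_def ik nv_def using wc v by simp
      qed
    qed
    then show ?thesis by blast
  qed
qed


lemma part1:
  assumes Y: "Y \<in> carrier_mat M K"
  shows "\<exists>V U. V \<in> carrier_mat M (mrank Y) \<and> mrank V = mrank Y \<and> U \<in> carrier_mat (mrank Y) K \<and>
            U * transpose_mat U = 1\<^sub>m (mrank Y) \<and> Y = V * U"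
proof -
  have "set (rows Y) \<subseteq> carrier_vec K" using Y by (metis carrier_matD(2) rows_carrier)
  then obtain k f where ok: "orth_ok K (rows Y) k f" using orth_exists by blast
  have fc: "\<And>i. i < k \<Longrightarrow> f i \<in> carrier_vec K" using ok unfolding orth_ok_def by auto
  have fd: "\<And>i. i < k \<Longrightarrow> dim_vec (f i) = K" using fc by auto
  have on: "\<And>i j. i < k \<Longrightarrow> j < k \<Longrightarrow> f i \<bullet> f j = (if i = j then 1 else 0)"
    using ok unfolding orth_ok_def by auto
  have rowsY: "\<And>a. a < M \<Longrightarrow> row Y a \<in> set (rows Y)" using Y
    by (metis carrier_matD(1) in_set_conv_nth length_rows nth_rows)
  have rec: "\<And>a. a < M \<Longrightarrow> row Y a = comb K (\<lambda>i. row Y a \<bullet> f i) f k"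
    using ok rowsY unfolding orth_ok_def by blast
  have perp: "\<And>i v. i < k \<Longrightarrow> v \<in> carrier_vec K \<Longrightarrow> (\<forall>y\<in>set (rows Y). y \<bullet> v = 0) \<Longrightarrow> f i \<bullet> v = 0"
    using ok unfolding orth_ok_def by auto
  define U where "U = mat k K (\<lambda>(i,j). f i $ j)"
  have U: "U \<in> carrier_mat k K" unfolding U_def by auto
  have UT: "transpose_mat U \<in> carrier_mat K k" using U by auto
  have rowU: "\<And>i. i < k \<Longrightarrow> row U i = f i" unfolding U_def using fd by (auto intro!: eq_vecI)
  have UU: "U * transpose_mat U = 1\<^sub>m k"
  proof (rule eq_matI)
    fix i j assume "i < dim_row (1\<^sub>m k :: real mat)" "j < dim_col (1\<^sub>m k :: real mat)"
    then have ij: "i < k" "j < k" by auto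
    show "(U * transpose_mat U) $$ (i, j) = 1\<^sub>m k $$ (i, j)"
      using ij U on rowU by auto
  qed (use U in auto)
  define V where "V = Y * transpose_mat U"
  have V: "V \<in> carrier_mat M k" unfolding V_def using Y U by auto
  have colUU: "col (transpose_mat U * U) b = comb K (\<lambda>i. f i $ b) f k" if b: "b < K" for b
  proof (rule eq_vecI)
    fix c assume "c < dim_vec (comb K (\<lambda>i. f i $ b) f k)"
    then have c: "c < K" by simp
    have "col (transpose_mat U * U) b $ c = row (transpose_mat U) c \<bullet> col U b" using b c U by auto
    also have "\<dots> = (\<Sum>i<k. f i $ c * f i $ b)" using b c U unfolding scalar_prod_def U_def
      by (simp add: atLeast0LessThan)
    finally show "col (transpose_mat U * U) b $ c = comb K (\<lambda>i. f i $ b) f k $ c"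
      using c unfolding comb_def by (simp add: mult.commute)
  qed (use b U in auto)
  have YVU: "Y = V * U"
  proof (rule eq_matI)
    fix a b assume "a < dim_row (V * U)" "b < dim_col (V * U)"
    then have ab: "a < M" "b < K" using V U by auto
    have "(V * U) = Y * (transpose_mat U * U)" unfolding V_def using Y U UT by auto
    then have "(V * U) $$ (a, b) = row Y a \<bullet> comb K (\<lambda>i. f i $ b) f k"
      using ab Y U colUU by auto
    also have "\<dots> = (\<Sum>i<k. f i $ b * (row Y a \<bullet> f i))"
      by (rule dot_comb[OF _ fc]) (use ab Y in auto)
    also have "\<dots> = comb K (\<lambda>i. row Y a \<bullet> f i) f k $ b" using ab unfolding comb_def
      by (simp add: mult.commute)
    also have "\<dots> = Y $$ (a, b)" using rec[OF ab(1)] ab Y by (metis carrier_matD(1) carrier_matD(2) index_row(1))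
    finally show "Y $$ (a, b) = (V * U) $$ (a, b)" by simp
  qed (use Y V U in auto)
  have ker: "c = 0\<^sub>v k" if c: "c \<in> carrier_vec k" and z: "V *\<^sub>v c = 0\<^sub>v M" for c
  proof -
    define w where "w = transpose_mat U *\<^sub>v c"
    have wc: "w \<in> carrier_vec K" unfolding w_def using UT c by auto
    have "Y *\<^sub>v w = 0\<^sub>v M" using z unfolding w_def V_def using Y UT c by auto
    then have "\<forall>y\<in>set (rows Y). y \<bullet> w = 0" using Y
      by (auto simp: in_set_conv_nth) (metis carrier_matD(1) index_mult_mat_vec index_zero_vec(1))
    then have fw: "\<And>i. i < k \<Longrightarrow> f i \<bullet> w = 0" using perp wc by auto
    have "U *\<^sub>v w = 0\<^sub>v k" using fw rowU U by (intro eq_vecI) auto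
    moreover have "U *\<^sub>v w = c" unfolding w_def using U UT c UU
      by (metis assoc_mult_mat_vec one_mult_mat_vec)
    ultimately show ?thesis by simp
  qed
  have rV: "mrank V = k" by (rule mrank_full_if_ker[OF V ker])
  have "mrank Y \<le> mrank V" using mrank_mult_le[OF V U] YVU by simp
  moreover have "mrank V \<le> mrank Y" unfolding V_def by (rule mrank_mult_le[OF Y UT])
  ultimately have k: "k = mrank Y" using rV by simp
  show ?thesis using V U UU YVU rV unfolding k by blast
qed


lemma nzrows_mult_le:
  assumes P: "P \<in> carrier_mat n m" and Q: "Q \<in> carrier_mat m k"
  shows "nzrows (P * Q) \<le> nzrows P"
proof -
  have "{i. i < dim_row (P*Q) \<and> row (P*Q) i \<noteq> 0\<^sub>v (dim_col (P*Q))}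
        \<subseteq> {i. i < dim_row P \<and> row P i \<noteq> 0\<^sub>v (dim_col P)}"
  proof
    fix i assume "i \<in> {i. i < dim_row (P*Q) \<and> row (P*Q) i \<noteq> 0\<^sub>v (dim_col (P*Q))}"
    then have i: "i < n" and nz: "row (P*Q) i \<noteq> 0\<^sub>v k" using P Q by auto
    show "i \<in> {i. i < dim_row P \<and> row P i \<noteq> 0\<^sub>v (dim_col P)}"
    proof (rule ccontr)
      assume "i \<notin> {i. i < dim_row P \<and> row P i \<noteq> 0\<^sub>v (dim_col P)}"
      then have "row P i = 0\<^sub>v m" using i P by auto
      then have "row (P*Q) i = 0\<^sub>v k" using P Q i by (auto intro!: eq_vecI)
      then show False using nz by simp
    qed
  qed
  then show ?thesis unfolding nzrows_def by (rule card_mono[rotated]) auto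
qed

lemma part2:
  assumes A: "A \<in> carrier_mat M N" and X: "X \<in> carrier_mat N K"
    and sp: "row_sparse s X"
    and inj: "inj_on (\<lambda>Z. A * Z) (Sigma_sr s (mrank (A * X)) N K)"
    and V: "V \<in> carrier_mat M (mrank (A*X))" and rV: "mrank V = mrank (A*X)"
    and U: "U \<in> carrier_mat (mrank (A*X)) K"
    and UU: "U * transpose_mat U = 1\<^sub>m (mrank (A*X))" and YVU: "A * X = V * U"
  shows "\<exists>W. l0_min A V N (mrank (A*X)) W \<and> (\<forall>W'. l0_min A V N (mrank (A*X)) W' \<longrightarrow> W' = W) \<and>
             row_sparse s W \<and> mrank W = mrank (A*X) \<and> X = W * U"
proof -
  define r where "r = mrank (A*X)"
  have V: "V \<in> carrier_mat M r" and rV: "mrank V = r" and U: "U \<in> carrier_mat r K"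
    and UU: "U * transpose_mat U = 1\<^sub>m r" using V rV U UU unfolding r_def by auto
  have UT: "transpose_mat U \<in> carrier_mat K r" using U by auto
  have kerV: "\<And>c. c \<in> carrier_vec r \<Longrightarrow> V *\<^sub>v c = 0\<^sub>v M \<Longrightarrow> c = 0\<^sub>v r"
    using ker_if_mrank_full[OF V rV] by blast
  have rankP: "mrank P = r" if P: "P \<in> carrier_mat N r" and AP: "A * P = V" for P
  proof (rule mrank_full_if_ker[OF P])
    fix c assume c: "c \<in> carrier_vec r" and z: "P *\<^sub>v c = 0\<^sub>v N"
    have "V *\<^sub>v c = A *\<^sub>v (P *\<^sub>v c)" using AP A P c by (metis assoc_mult_mat_vec)
    also have "\<dots> = 0\<^sub>v M" using z A by auto
    finally show "c = 0\<^sub>v r" using kerV c by auto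
  qed
  have inSig: "P * U \<in> Sigma_sr s r N K" if P: "P \<in> carrier_mat N r" and AP: "A * P = V"
      and nP: "nzrows P \<le> s" for P
  proof -
    have "r = mrank P" using rankP[OF P AP] by simp
    also have "P = (P * U) * transpose_mat U" using P U UT UU by (simp add: assoc_mult_mat[OF P U UT])
    then have "mrank P \<le> mrank (P * U)" using mrank_mult_le[OF _ UT, of "P*U" N] P U
      by (metis mult_carrier_mat)
    finally have "r \<le> mrank (P * U)" .
    moreover have "nzrows (P * U) \<le> s" using nzrows_mult_le[OF P U] nP by simp
    ultimately show ?thesis unfolding Sigma_sr_def row_sparse_def using P U by auto
  qed
  define W0 where "W0 = X * transpose_mat U"
  have W0: "W0 \<in> carrier_mat N r" unfolding W0_def using X UT by auto
  have AW0: "A * W0 = V"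
  proof -
    have "A * W0 = (A * X) * transpose_mat U" unfolding W0_def using A X UT by simp
    also have "\<dots> = V * (U * transpose_mat U)" unfolding YVU using V U UT by simp
    also have "\<dots> = V" using UU V by simp
    finally show ?thesis .
  qed
  have rW0: "mrank W0 = r" by (rule rankP[OF W0 AW0])
  have nW0: "nzrows W0 \<le> s" using nzrows_mult_le[OF X UT] sp unfolding W0_def row_sparse_def by simp
  have XSig: "X \<in> Sigma_sr s r N K"
  proof -
    have "r \<le> mrank X" using rW0 mrank_mult_le[OF X UT] unfolding W0_def by simp
    then show ?thesis using X sp unfolding Sigma_sr_def by auto
  qed
  have AZU: "A * (Z * U) = A * X" if Z: "Z \<in> carrier_mat N r" and AZ: "A * Z = V" for Z
  proof -
    have "A * (Z * U) = (A * Z) * U" using A Z U by simp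
    then show ?thesis using AZ YVU by simp
  qed
  have uniq: "Z = W0" if Z: "Z \<in> carrier_mat N r" and AZ: "A * Z = V" and nZ: "nzrows Z \<le> s" for Z
  proof -
    have "Z * U = X" using inj inSig[OF Z AZ nZ] XSig AZU[OF Z AZ] unfolding r_def inj_on_def by blast
    then have "Z * U * transpose_mat U = W0" unfolding W0_def by simp
    then show ?thesis using Z U UT UU by (simp add: assoc_mult_mat[OF Z U UT])
  qed
  have XW0: "X = W0 * U" using uniq[OF W0 AW0 nW0] 
  proof -
    have "W0 * U = X" using inj inSig[OF W0 AW0 nW0] XSig AZU[OF W0 AW0] unfolding r_def inj_on_def by blast
    then show ?thesis by simp
  qed
  have l0: "l0_min A V N r W0"
    unfolding l0_min_def
  proof (intro conjI ballI impI)
    fix Z assume Z: "Z \<in> carrier_mat N r" and AZ: "A * Z = V"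
    show "nzrows W0 \<le> nzrows Z"
    proof (rule ccontr)
      assume "\<not> nzrows W0 \<le> nzrows Z"
      then have "nzrows Z \<le> s" "nzrows Z < nzrows W0" using nW0 by auto
      then show False using uniq[OF Z AZ] by simp
    qed
  qed (use W0 AW0 in auto)
  have un: "\<forall>W'. l0_min A V N r W' \<longrightarrow> W' = W0"
  proof (intro allI impI)
    fix W' assume "l0_min A V N r W'"
    then have "W' \<in> carrier_mat N r" "A * W' = V" "nzrows W' \<le> nzrows W0"
      using W0 AW0 unfolding l0_min_def by auto
    then show "W' = W0" using uniq nW0 by simp
  qed
  show ?thesis using l0 un nW0 rW0 XW0 unfolding r_def row_sparse_def by blast
qed

theorem theorem4:
  fixes M N K s :: nat and A X :: "real mat"
  assumes "M > 0" "N > 0" "K > 0"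
    and "A \<in> carrier_mat M N" and "X \<in> carrier_mat N K"
    and "row_sparse s X"
    and "inj_on (\<lambda>Z. A * Z) (Sigma_sr s (mrank (A * X)) N K)"
  shows "let Y = A * X; r = mrank Y in
     (\<exists>V U. V \<in> carrier_mat M r \<and> mrank V = r \<and> U \<in> carrier_mat r K \<and>
            U * transpose_mat U = 1\<^sub>m r \<and> Y = V * U) \<and>
     (\<forall>V U. V \<in> carrier_mat M r \<and> mrank V = r \<and> U \<in> carrier_mat r K \<and>
            U * transpose_mat U = 1\<^sub>m r \<and> Y = V * U \<longrightarrow>
        (\<exists>W. l0_min A V N r W \<and> (\<forall>W'. l0_min A V N r W' \<longrightarrow> W' = W) \<and>
             row_sparse s W \<and> mrank W = r \<and> X = W * U))"
proof -
  have Y: "A * X \<in> carrier_mat M K" using assms by auto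
  show ?thesis unfolding Let_def
    using part1[OF Y] part2[OF assms(4,5,6,7)] by blast
qed

end
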